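(* Let $\mathcal D_n$ be a minimal DFA with state set $Q_n$ and transition semigroup $T_n$. For $t\in T_n$ and $p,q\in Q_n$: $p\prec q$ implies $pt\preceq qt$; and if $p\prec pt$, then $p\prec pt\prec\cdots\prec pt^k=pt^{k+1}$ for some $k\ge1$. Similarly, $p\succ q$ implies $pt\succeq qt$, and $p\succ pt$ implies $p\succ pt\succ\cdots\succ pt^k=pt^{k+1}$ for some $k\ge 1$.
   Context: The transition semigroup is the set of transformations $q\mapsto\delta(q,w)$ of $Q_n$ induced by nonempty words $w$; $qt$ denotes the image of $q$ under $t$, and $t^k$ is the $k$-fold composition. For a state $q$, $K_q$ is the language accepted by the DFA started in $q$. We write $p\prec q$ if $K_p\subsetneq K_q$, and $p\preceq q$ if $K_p\subseteq K_q$ (equivalently $p=q$ or $p\prec q$ in a minimal DFA); $\succ,\succeq$ are the reverse relations. *)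

theory Defs
  imports Main
begin

definition dfa :: "'q set \<Rightarrow> 'a set \<Rightarrow> ('q \<Rightarrow> 'a \<Rightarrow> 'q) \<Rightarrow> 'q \<Rightarrow> 'q set \<Rightarrow> bool" where
  "dfa Q Al delta q0 F \<longleftrightarrow> finite Q \<and> finite Al \<and> q0 \<in> Q \<and> F \<subseteq> Q \<and>
     (\<forall>q\<in>Q. \<forall>a\<in>Al. delta q a \<in> Q)"

definition delta_star :: "('q \<Rightarrow> 'a \<Rightarrow> 'q) \<Rightarrow> 'q \<Rightarrow> 'a list \<Rightarrow> 'q" where
  "delta_star delta q w = foldl delta q w"

definition lang_from :: "'a set \<Rightarrow> ('q \<Rightarrow> 'a \<Rightarrow> 'q) \<Rightarrow> 'q set \<Rightarrow> 'q \<Rightarrow> 'a list set" where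
  "lang_from Al delta F q = {w \<in> lists Al. delta_star delta q w \<in> F}"

definition minimal_dfa :: "'q set \<Rightarrow> 'a set \<Rightarrow> ('q \<Rightarrow> 'a \<Rightarrow> 'q) \<Rightarrow> 'q \<Rightarrow> 'q set \<Rightarrow> bool" where
  "minimal_dfa Q Al delta q0 F \<longleftrightarrow> dfa Q Al delta q0 F \<and>
     (\<forall>q\<in>Q. \<exists>w\<in>lists Al. delta_star delta q0 w = q) \<and>
     (\<forall>p\<in>Q. \<forall>q\<in>Q. lang_from Al delta F p = lang_from Al delta F q \<longrightarrow> p = q)"

definition trans_semigroup :: "'q set \<Rightarrow> 'a set \<Rightarrow> ('q \<Rightarrow> 'a \<Rightarrow> 'q) \<Rightarrow> ('q \<Rightarrow> 'q) set" where
  "trans_semigroup Q Al delta =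
     {t. \<exists>w\<in>lists Al. w \<noteq> [] \<and> (\<forall>q\<in>Q. t q = delta_star delta q w)}"

end

theory Submission
  imports Defs
begin

lemma chain_stab:
  fixes g :: "nat \<Rightarrow> 'q" and K :: "'q \<Rightarrow> 'b"
  assumes fin: "finite Q" and gQ: "\<And>i. g i \<in> Q" and inj: "inj_on K Q"
    and step: "\<And>i. r (K (g i)) (K (g (Suc i)))"
    and tr: "\<And>x y z. r x y \<Longrightarrow> r y z \<Longrightarrow> r x z"
    and as: "\<And>x y. r x y \<Longrightarrow> r y x \<Longrightarrow> x = y"
    and first: "K (g 0) \<noteq> K (g 1)"
  shows "\<exists>k\<ge>1. (\<forall>i<k. r (K (g i)) (K (g (Suc i))) \<and> K (g i) \<noteq> K (g (Suc i))) \<and> g k = g (Suc k)"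
proof -
  have ex: "\<exists>k. g k = g (Suc k)"
  proof (rule ccontr)
    assume nex: "\<not> (\<exists>k. g k = g (Suc k))"
    have neq: "K (g i) \<noteq> K (g (Suc i))" for i
      proof
      assume "K (g i) = K (g (Suc i))"
      then have "g i = g (Suc i)" using inj gQ by (simp add: inj_on_def)
      then show False using nex by blast
    qed
    have lt: "i < j \<Longrightarrow> r (K (g i)) (K (g j))" for i j
    proof (induction j)
      case 0 then show ?case by simp
    next
      case (Suc j)
      show ?case
      proof (cases "i = j")
        case True then show ?thesis using step by simp
      next
        case False
        then have "i < j" using Suc.prems by simp
        then show ?thesis using Suc.IH step tr by blast
      qed
    qed
    have aux: "False" if "i < j" "g i = g j" for i j
    proof (cases "Suc i = j")
      case True then show False using that neq by metis
    next
      case False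
      then have "Suc i < j" using that by simp
      then have b: "r (K (g (Suc i))) (K (g j))" by (rule lt)
      have "K (g (Suc i)) = K (g i)"
      proof (rule as)
        show "r (K (g (Suc i))) (K (g i))" using b that(2) by simp
        show "r (K (g i)) (K (g (Suc i)))" by (rule step)
      qed
      then show False using neq by metis
    qed
    have "inj g"
    proof (rule injI)
      fix i j assume e: "g i = g j"
      show "i = j"
      proof (rule ccontr)
        assume "i \<noteq> j"
        then consider "i < j" | "j < i" by linarith
        then show False
        proof cases
          case 1 show False by (rule aux[OF 1 e])
        next
          case 2 show False by (rule aux[OF 2 e[symmetric]])
        qed
      qed
    qed
    moreover have "range g \<subseteq> Q" using gQ by auto
    ultimately have "finite (range g)" using fin finite_subset by blast
    then have "finite (UNIV :: nat set)" using \<open>inj g\<close> finite_imageD by blast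
    then show False by simp
  qed
  define k where "k = (LEAST k. g k = g (Suc k))"
  have gk: "g k = g (Suc k)" unfolding k_def by (rule LeastI_ex[OF ex])
  have k1: "k \<ge> 1"
  proof (rule ccontr)
    assume "\<not> k \<ge> 1" then have "k = 0" by simp
    then show False using gk first by simp
  qed
  have "\<forall>i<k. r (K (g i)) (K (g (Suc i))) \<and> K (g i) \<noteq> K (g (Suc i))"
  proof (intro allI impI conjI)
    fix i show "r (K (g i)) (K (g (Suc i)))" by (rule step)
  next
    fix i assume "i < k"
    then have "g i \<noteq> g (Suc i)" unfolding k_def using not_less_Least by blast
    then show "K (g i) \<noteq> K (g (Suc i))" using inj gQ by (metis inj_onD)
  qed
  then show ?thesis using k1 gk by blast
qed

lemma ds_Q: "q \<in> Q \<Longrightarrow> w \<in> lists Al \<Longrightarrow> (\<forall>q\<in>Q. \<forall>a\<in>Al. delta q a \<in> Q)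
   \<Longrightarrow> delta_star delta q w \<in> Q"
  by (induction w arbitrary: q) (auto simp: delta_star_def)

lemma ds_app: "delta_star delta q (u @ v) = delta_star delta (delta_star delta q u) v"
  by (simp add: delta_star_def)

theorem proposition3:
  fixes Q :: "'q set" and Al :: "'a set" and delta :: "'q \<Rightarrow> 'a \<Rightarrow> 'q"
    and q0 :: 'q and F :: "'q set"
  defines "K \<equiv> lang_from Al delta F"
  assumes "minimal_dfa Q Al delta q0 F"
    and "t \<in> trans_semigroup Q Al delta"
  shows "(\<forall>p\<in>Q. \<forall>q\<in>Q. K p \<subset> K q \<longrightarrow> K (t p) \<subseteq> K (t q))
       \<and> (\<forall>p\<in>Q. K p \<subset> K (t p) \<longrightarrow>
            (\<exists>k\<ge>1. (\<forall>i<k. K ((t ^^ i) p) \<subset> K ((t ^^ Suc i) p))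
                   \<and> (t ^^ k) p = (t ^^ Suc k) p))
       \<and> (\<forall>p\<in>Q. \<forall>q\<in>Q. K q \<subset> K p \<longrightarrow> K (t q) \<subseteq> K (t p))
       \<and> (\<forall>p\<in>Q. K (t p) \<subset> K p \<longrightarrow>
            (\<exists>k\<ge>1. (\<forall>i<k. K ((t ^^ Suc i) p) \<subset> K ((t ^^ i) p))
                   \<and> (t ^^ k) p = (t ^^ Suc k) p))"
proof -
  have cl: "\<forall>q\<in>Q. \<forall>a\<in>Al. delta q a \<in> Q" and fin: "finite Q"
    using assms(2) unfolding minimal_dfa_def dfa_def by auto
  have inj: "inj_on K Q"
    using assms(2) unfolding minimal_dfa_def K_def inj_on_def by blast
  obtain w where w: "w \<in> lists Al" "\<forall>q\<in>Q. t q = delta_star delta q w"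
    using assms(3) unfolding trans_semigroup_def by blast
  have tQ: "q \<in> Q \<Longrightarrow> t q \<in> Q" for q using w ds_Q[OF _ w(1) cl] by simp
  have mono: "K (t p) \<subseteq> K (t q)" if "p \<in> Q" "q \<in> Q" "K p \<subseteq> K q" for p q
  proof
    fix v assume "v \<in> K (t p)"
    then have "v \<in> lists Al" "delta_star delta p (w @ v) \<in> F"
      using w that(1) by (auto simp: K_def lang_from_def ds_app)
    then have "w @ v \<in> K p" using w(1) by (auto simp: K_def lang_from_def)
    then have "w @ v \<in> K q" using that(3) by blast
    then show "v \<in> K (t q)" using w that(2) by (auto simp: K_def lang_from_def ds_app)
  qed
  have itQ: "p \<in> Q \<Longrightarrow> (t ^^ i) p \<in> Q" for p i
    by (induction i) (auto simp: tQ)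
  have P1: "\<forall>p\<in>Q. \<forall>q\<in>Q. K p \<subset> K q \<longrightarrow> K (t p) \<subseteq> K (t q)"
    using mono by blast
  have P3: "\<forall>p\<in>Q. \<forall>q\<in>Q. K q \<subset> K p \<longrightarrow> K (t q) \<subseteq> K (t p)"
    using mono by blast
  have P2: "\<forall>p\<in>Q. K p \<subset> K (t p) \<longrightarrow>
            (\<exists>k\<ge>1. (\<forall>i<k. K ((t ^^ i) p) \<subset> K ((t ^^ Suc i) p))
                   \<and> (t ^^ k) p = (t ^^ Suc k) p)"
  proof (intro ballI impI)
    fix p assume pQ: "p \<in> Q" and lt: "K p \<subset> K (t p)"
    have st: "K ((t ^^ i) p) \<subseteq> K ((t ^^ Suc i) p)" for i
    proof (induction i)
      case 0 then show ?case using lt by simp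
    next
      case (Suc i)
      then show ?case using mono[OF itQ[OF pQ, of i] itQ[OF pQ, of "Suc i"]] by simp
    qed
    have "\<exists>k\<ge>1. (\<forall>i<k. K ((t ^^ i) p) \<subseteq> K ((t ^^ Suc i) p) \<and> K ((t ^^ i) p) \<noteq> K ((t ^^ Suc i) p)) \<and> (t ^^ k) p = (t ^^ Suc k) p"
      by (rule chain_stab[where Q=Q and r="(\<subseteq>)"]) (use fin itQ pQ inj st lt in auto)
    then show "\<exists>k\<ge>1. (\<forall>i<k. K ((t ^^ i) p) \<subset> K ((t ^^ Suc i) p)) \<and> (t ^^ k) p = (t ^^ Suc k) p"
      by blast
  qed
  have P4: "\<forall>p\<in>Q. K (t p) \<subset> K p \<longrightarrow>
            (\<exists>k\<ge>1. (\<forall>i<k. K ((t ^^ Suc i) p) \<subset> K ((t ^^ i) p))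
                   \<and> (t ^^ k) p = (t ^^ Suc k) p)"
  proof (intro ballI impI)
    fix p assume pQ: "p \<in> Q" and lt: "K (t p) \<subset> K p"
    have st: "K ((t ^^ Suc i) p) \<subseteq> K ((t ^^ i) p)" for i
    proof (induction i)
      case 0 then show ?case using lt by simp
    next
      case (Suc i)
      then show ?case using mono[OF itQ[OF pQ, of "Suc i"] itQ[OF pQ, of i]] by simp
    qed
    have "\<exists>k\<ge>1. (\<forall>i<k. K ((t ^^ Suc i) p) \<subseteq> K ((t ^^ i) p) \<and> K ((t ^^ i) p) \<noteq> K ((t ^^ Suc i) p)) \<and> (t ^^ k) p = (t ^^ Suc k) p"
      by (rule chain_stab[where Q=Q and r="\<lambda>x y. y \<subseteq> x"]) (use fin itQ pQ inj st lt in auto)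
    then show "\<exists>k\<ge>1. (\<forall>i<k. K ((t ^^ Suc i) p) \<subset> K ((t ^^ i) p)) \<and> (t ^^ k) p = (t ^^ Suc k) p"
      by blast
  qed
  show ?thesis using P1 P2 P3 P4 by blast
qed

end
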